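(* If $G \ne K_4$ is a connected, claw-free, cubic graph of order $n$, then (a) $\frac{1}{3}n \le \alpha(G) \le \frac{2}{5}n$, and (b) $\frac{3}{5}n \le m(G,3) \le \frac{2}{3}n$.
   Context: A graph is claw-free if it has no induced subgraph isomorphic to $K_{1,3}$; it is cubic if every vertex has degree $3$. $\alpha(G)$ is the independence number. $3$-percolation: starting from a set $S$ of infected vertices, repeatedly infect any uninfected vertex having at least $3$ infected neighbors; $S$ is $3$-percolating if eventually all vertices are infected, and $m(G,3)$ is the minimum cardinality of a $3$-percolating set of $G$. *)

theory Defs
  imports Complex_Main
begin

definition graph :: "'a set \<Rightarrow> ('a \<Rightarrow> 'a \<Rightarrow> bool) \<Rightarrow> bool" where
  "graph V E \<longleftrightarrow> finite V \<and> (\<forall>u v. E u v \<longrightarrow> u \<in> V \<and> v \<in> V)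
     \<and> (\<forall>u v. E u v \<longrightarrow> E v u) \<and> (\<forall>v. \<not> E v v)"

definition nbrs :: "'a set \<Rightarrow> ('a \<Rightarrow> 'a \<Rightarrow> bool) \<Rightarrow> 'a \<Rightarrow> 'a set" where
  "nbrs V E v = {u \<in> V. E v u}"

definition cubic :: "'a set \<Rightarrow> ('a \<Rightarrow> 'a \<Rightarrow> bool) \<Rightarrow> bool" where
  "cubic V E \<longleftrightarrow> (\<forall>v\<in>V. card (nbrs V E v) = 3)"

definition connected_graph :: "'a set \<Rightarrow> ('a \<Rightarrow> 'a \<Rightarrow> bool) \<Rightarrow> bool" where
  "connected_graph V E \<longleftrightarrow> V \<noteq> {} \<and>
     (\<forall>u\<in>V. \<forall>v\<in>V. (\<lambda>x y. E x y)\<^sup>*\<^sup>* u v)"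

definition claw_free :: "'a set \<Rightarrow> ('a \<Rightarrow> 'a \<Rightarrow> bool) \<Rightarrow> bool" where
  "claw_free V E \<longleftrightarrow> \<not> (\<exists>c\<in>V. \<exists>x\<in>V. \<exists>y\<in>V. \<exists>z\<in>V.
     E c x \<and> E c y \<and> E c z \<and> x \<noteq> y \<and> x \<noteq> z \<and> y \<noteq> z \<and>
     \<not> E x y \<and> \<not> E x z \<and> \<not> E y z)"

definition is_K4 :: "'a set \<Rightarrow> ('a \<Rightarrow> 'a \<Rightarrow> bool) \<Rightarrow> bool" where
  "is_K4 V E \<longleftrightarrow> card V = 4 \<and> (\<forall>u\<in>V. \<forall>v\<in>V. u \<noteq> v \<longrightarrow> E u v)"

definition independent_set :: "'a set \<Rightarrow> ('a \<Rightarrow> 'a \<Rightarrow> bool) \<Rightarrow> 'a set \<Rightarrow> bool" where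
  "independent_set V E I \<longleftrightarrow> I \<subseteq> V \<and> (\<forall>u\<in>I. \<forall>v\<in>I. \<not> E u v)"

definition independence_number :: "'a set \<Rightarrow> ('a \<Rightarrow> 'a \<Rightarrow> bool) \<Rightarrow> nat" where
  "independence_number V E = Max (card ` {I. independent_set V E I})"

text \<open>r-percolation: the set of eventually infected vertices starting from S
  (a vertex becomes infected once some r of its neighbours, a finite set T, are infected).\<close>
inductive_set infected :: "'a set \<Rightarrow> ('a \<Rightarrow> 'a \<Rightarrow> bool) \<Rightarrow> nat \<Rightarrow> 'a set \<Rightarrow> 'a set"
  for V E r S where
  init: "v \<in> S \<Longrightarrow> v \<in> infected V E r S"
| step: "v \<in> V \<Longrightarrow> T \<subseteq> nbrs V E v \<Longrightarrow> finite T \<Longrightarrow> card T \<ge> r \<Longrightarrow>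
      (\<And>u. u \<in> T \<Longrightarrow> u \<in> infected V E r S) \<Longrightarrow> v \<in> infected V E r S"

definition percolating :: "'a set \<Rightarrow> ('a \<Rightarrow> 'a \<Rightarrow> bool) \<Rightarrow> nat \<Rightarrow> 'a set \<Rightarrow> bool" where
  "percolating V E r S \<longleftrightarrow> S \<subseteq> V \<and> V \<subseteq> infected V E r S"

definition min_percolating :: "'a set \<Rightarrow> ('a \<Rightarrow> 'a \<Rightarrow> bool) \<Rightarrow> nat \<Rightarrow> nat" where
  "min_percolating V E r = Min (card ` {S. percolating V E r S})"

end

theory Submission
  imports Defs
begin


lemma nbrs_fin: "graph V E \<Longrightarrow> finite (nbrs V E v)"
  unfolding graph_def nbrs_def by auto

lemma nbrs_mem: "graph V E \<Longrightarrow> u \<in> nbrs V E v \<longleftrightarrow> E v u"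
  unfolding graph_def nbrs_def by auto

lemma card_filter_sum: "finite A \<Longrightarrow> card {x\<in>A. P x} = (\<Sum>x\<in>A. if P x then 1 else 0)"
  by (simp add: sum.If_cases Collect_conj_eq Int_commute)

lemma claw_freeD: "claw_free V E \<Longrightarrow> c\<in>V \<Longrightarrow> x\<in>V \<Longrightarrow> y\<in>V \<Longrightarrow> z\<in>V \<Longrightarrow> E c x \<Longrightarrow> E c y \<Longrightarrow> E c z
  \<Longrightarrow> x\<noteq>y \<Longrightarrow> x\<noteq>z \<Longrightarrow> y\<noteq>z \<Longrightarrow> \<not>E x y \<Longrightarrow> \<not>E x z \<Longrightarrow> \<not>E y z \<Longrightarrow> False"
  unfolding claw_free_def
  apply (erule notE)
  apply (rule bexI[of _ c], rule bexI[of _ x], rule bexI[of _ y], rule bexI[of _ z])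
  by auto

lemma perc_char:
  assumes g: "graph V E" and c: "cubic V E"
  shows "percolating V E 3 S \<longleftrightarrow> S \<subseteq> V \<and> independent_set V E (V - S)"
proof
  assume p: "percolating V E 3 S"
  have "v \<in> S \<or> (v \<in> V \<and> nbrs V E v \<subseteq> S)" if "v \<in> infected V E 3 S" for v
    using that
  proof (induction rule: infected.induct)
    case (init v) then show ?case by simp
  next
    case (step v T)
    have f: "finite (nbrs V E v)" using nbrs_fin[OF g] .
    have "card (nbrs V E v) = 3" using step.hyps(1) c unfolding cubic_def by simp
    then have "card T = card (nbrs V E v)" using card_mono[OF f step.hyps(2)] step.hyps(4) by simp
    then have "T = nbrs V E v"
      using card_subset_eq[OF f step.hyps(2)] by simp
    show ?case
    proof (cases "v \<in> S")
      case False
      have "nbrs V E v \<subseteq> S"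
      proof
        fix u assume u: "u \<in> nbrs V E v"
        show "u \<in> S"
        proof (rule ccontr)
          assume "u \<notin> S"
          then have "nbrs V E u \<subseteq> S" using step.IH \<open>T = _\<close> u by blast
          moreover have "v \<in> nbrs V E u" using u g step.hyps(1) unfolding nbrs_def graph_def by auto
          ultimately show False using False by blast
        qed
      qed
      then show ?thesis using step.hyps(1) by blast
    qed simp
  qed
  note inf = this
  have "\<not> E u w" if "u \<in> V - S" "w \<in> V - S" for u w
  proof
    assume e: "E u w"
    have "u \<in> infected V E 3 S" using p that unfolding percolating_def by auto
    then have "nbrs V E u \<subseteq> S" using inf that by blast
    moreover have "w \<in> nbrs V E u" using e that unfolding nbrs_def by auto
    ultimately show False using that by blast
  qed
  then show "S \<subseteq> V \<and> independent_set V E (V - S)"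
    using p unfolding percolating_def independent_set_def by auto
next
  assume a: "S \<subseteq> V \<and> independent_set V E (V - S)"
  have "v \<in> infected V E 3 S" if v: "v \<in> V" for v
  proof (cases "v \<in> S")
    case True then show ?thesis by (rule infected.init)
  next
    case False
    show ?thesis
    proof (rule infected.step[where v=v and T="nbrs V E v"])
      show "3 \<le> card (nbrs V E v)" using c v unfolding cubic_def by simp
      fix u assume "u \<in> nbrs V E v"
      then have "u \<in> S" using a v False unfolding independent_set_def nbrs_def by auto
      then show "u \<in> infected V E 3 S" by (rule infected.init)
    qed (use v nbrs_fin[OF g] in auto)
  qed
  then show "percolating V E 3 S" using a unfolding percolating_def by auto
qed

lemma indep_upper:
  assumes g: "graph V E" and c: "cubic V E" and cf: "claw_free V E"
    and I: "independent_set V E I"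
  shows "5 * card I \<le> 2 * card V"
proof -
  have fV: "finite V" using g unfolding graph_def by simp
  have IV: "I \<subseteq> V" using I unfolding independent_set_def by simp
  have fI: "finite I" using fV IV finite_subset by blast
  have n1: "nbrs V E i = {u \<in> V - I. E i u}" if "i \<in> I" for i
    using I that unfolding independent_set_def nbrs_def by auto
  have le2: "card {i \<in> I. E i u} \<le> 2" if "u \<in> V - I" for u
  proof (rule ccontr)
    assume "\<not> ?thesis"
    then have "3 \<le> card {i \<in> I. E i u}" by simp
    then obtain A where A: "A \<subseteq> {i \<in> I. E i u}" "card A = 3"
      by (meson obtain_subset_with_card_n)
    then obtain p q r where "A = {p,q,r}" "p \<noteq> q" "q \<noteq> r" "p \<noteq> r"
      by (metis card_3_iff)
    note pqr = this
    have sub: "p \<in> I" "q \<in> I" "r \<in> I" "E p u" "E q u" "E r u" using A pqr by auto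
    have "E u p" "E u q" "E u r" using sub g unfolding graph_def by auto
    moreover have "p \<in> V" "q \<in> V" "r \<in> V" using sub IV by auto
    moreover have "\<not> E p q" "\<not> E p r" "\<not> E q r" using sub I unfolding independent_set_def by auto
    ultimately show False using claw_freeD[OF cf, of u p q r] that pqr by blast
  qed
  have cn: "card (nbrs V E i) = (\<Sum>u\<in>V-I. if E i u then 1 else 0)" if "i\<in>I" for i
  proof -
    have "card (nbrs V E i) = card {u \<in> V - I. E i u}" using n1[OF that] by (rule arg_cong)
    also have "\<dots> = (\<Sum>u\<in>V-I. if E i u then 1 else 0)" by (rule card_filter_sum) (use fV in simp)
    finally show ?thesis .
  qed
  have cn2: "card {i \<in> I. E i u} = (\<Sum>i\<in>I. if E i u then 1 else 0)" for u
    by (rule card_filter_sum) (rule fI)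
  have "(\<Sum>i\<in>I. card (nbrs V E i)) = (\<Sum>i\<in>I. 3)"
    using c IV unfolding cubic_def by (intro sum.cong) auto
  then have "3 * card I = (\<Sum>i\<in>I. card (nbrs V E i))" by simp
  also have "\<dots> = (\<Sum>i\<in>I. \<Sum>u\<in>V - I. if E i u then 1 else 0)"
    using cn by (intro sum.cong) auto
  also have "\<dots> = (\<Sum>u\<in>V - I. \<Sum>i\<in>I. if E i u then 1 else 0)"
    by (rule sum.swap)
  also have "\<dots> = (\<Sum>u\<in>V - I. card {i \<in> I. E i u})"
    using cn2 by (intro sum.cong) auto
  also have "\<dots> \<le> (\<Sum>u\<in>V - I. 2)" by (rule sum_mono) (use le2 in auto)
  also have "\<dots> = 2 * card (V - I)" by simp
  also have "\<dots> = 2 * (card V - card I)" using fI IV by (simp add: card_Diff_subset)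
  finally show ?thesis using card_mono[OF fV IV] by linarith
qed



lemma claw_free_alt: "claw_free V E \<longleftrightarrow> (\<forall>c x y z. c\<in>V \<longrightarrow> x\<in>V \<longrightarrow> y\<in>V \<longrightarrow> z\<in>V \<longrightarrow> E c x \<longrightarrow> E c y \<longrightarrow> E c z
  \<longrightarrow> x\<noteq>y \<longrightarrow> x\<noteq>z \<longrightarrow> y\<noteq>z \<longrightarrow> \<not>E x y \<longrightarrow> \<not>E x z \<longrightarrow> \<not>E y z \<longrightarrow> False)"
  unfolding claw_free_def by blast

definition k4free :: "('a \<Rightarrow> 'a \<Rightarrow> bool) \<Rightarrow> bool" where
  "k4free E \<longleftrightarrow> (\<forall>a b c d. E a b \<longrightarrow> E a c \<longrightarrow> E a d \<longrightarrow> E b c \<longrightarrow> E b d \<longrightarrow> E c d \<longrightarrow> False)"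

definition restr :: "'a set \<Rightarrow> ('a \<Rightarrow> 'a \<Rightarrow> bool) \<Rightarrow> 'a \<Rightarrow> 'a \<Rightarrow> bool" where
  "restr W E = (\<lambda>u w. E u w \<and> u \<in> W \<and> w \<in> W)"

lemma restr_graph: "graph V E \<Longrightarrow> W \<subseteq> V \<Longrightarrow> graph W (restr W E)"
  unfolding graph_def restr_def using finite_subset[of W V] by auto

lemma restr_claw: assumes "claw_free V E" "W \<subseteq> V" shows "claw_free W (restr W E)"
  using assms unfolding claw_free_alt restr_def by blast

lemma restr_k4: assumes "k4free E" shows "k4free (restr W E)"
  using assms unfolding k4free_def restr_def by blast

lemma restr_deg: "graph V E \<Longrightarrow> W \<subseteq> V \<Longrightarrow> \<forall>v\<in>V. card (nbrs V E v) \<le> 3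
   \<Longrightarrow> \<forall>v\<in>W. card (nbrs W (restr W E) v) \<le> 3"
proof
  fix v assume a: "graph V E" "W \<subseteq> V" "\<forall>v\<in>V. card (nbrs V E v) \<le> 3" "v \<in> W"
  have "nbrs W (restr W E) v \<subseteq> nbrs V E v" using a(2) unfolding nbrs_def restr_def by auto
  then have "card (nbrs W (restr W E) v) \<le> card (nbrs V E v)"
    using nbrs_fin[OF a(1)] card_mono by blast
  then show "card (nbrs W (restr W E) v) \<le> 3" using a by force
qed

lemma combine:
  assumes g: "graph V E" and W: "W \<subseteq> V" and I': "independent_set W E' I'"
    and sub: "\<And>u w. u \<in> W \<Longrightarrow> w \<in> W \<Longrightarrow> E u w \<Longrightarrow> E' u w"
    and J: "J \<subseteq> V - W" "\<forall>u\<in>J. \<forall>w\<in>J. \<not> E u w" and JI: "\<forall>j\<in>J. \<forall>u\<in>I'. \<not> E j u"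
    and c1: "card V \<le> card W + 3 * card J" and c2: "card W \<le> 3 * card I'"
  shows "\<exists>I. independent_set V E I \<and> card V \<le> 3 * card I"
proof (intro exI conjI)
  have fV: "finite V" using g unfolding graph_def by simp
  have I'W: "I' \<subseteq> W" using I' unfolding independent_set_def by simp
  have sym: "\<And>u w. E u w \<Longrightarrow> E w u" using g unfolding graph_def by blast
  show "independent_set V E (J \<union> I')"
    unfolding independent_set_def
  proof (intro conjI ballI)
    show "J \<union> I' \<subseteq> V" using J W I'W by blast
    fix u w assume u: "u \<in> J \<union> I'" and w: "w \<in> J \<union> I'"
    show "\<not> E u w"
    proof
      assume e: "E u w"
      show False
      proof (cases "u \<in> J")
        case True then show False using w J(2) JI e by blast
      next
        case False
        then have "u \<in> I'" using u by blast
        show False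
        proof (cases "w \<in> J")
          case True then show False using JI sym e \<open>u \<in> I'\<close> by blast
        next
          case False then have "w \<in> I'" using w by blast
          then show False using sub[of u w] e I' I'W \<open>u \<in> I'\<close> unfolding independent_set_def by blast
        qed
      qed
    qed
  qed
  have fJ: "finite J" using J(1) fV by (meson finite_Diff finite_subset)
  have fI: "finite I'" using I'W W fV by (meson finite_subset)
  have "card (J \<union> I') = card J + card I'"
    using J(1) I'W fJ fI by (intro card_Un_disjoint) auto
  then show "card V \<le> 3 * card (J \<union> I')" using c1 c2 by simp
qed

lemma three_elem:
  assumes "card A = 3" "a \<in> A" "b \<in> A" "a \<noteq> b"
  obtains c where "A = {a,b,c}" "c \<noteq> a" "c \<noteq> b"
proof -
  have f: "finite A" using assms(1) card.infinite by fastforce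
  have "card (A - {a,b}) = 1" using assms f by (simp add: card_Diff_subset)
  then obtain c where "A - {a,b} = {c}" by (meson card_1_singletonE)
  then show ?thesis using that assms by blast
qed



lemma alpha_lower:
  assumes "graph V E" "claw_free V E" "k4free E" "\<forall>v\<in>V. card (nbrs V E v) \<le> 3"
  shows "\<exists>I. independent_set V E I \<and> card V \<le> 3 * card I"
  using assms
proof (induction "card V" arbitrary: V E rule: less_induct)
  case less
  note g = less.prems(1) and cf = less.prems(2) and k4 = less.prems(3) and deg = less.prems(4)
  have fV: "finite V" using g unfolding graph_def by simp
  have sym: "\<And>u w. E u w \<Longrightarrow> E w u" using g unfolding graph_def by blast
  have irr: "\<And>u. \<not> E u u" using g unfolding graph_def by blast
  have inV: "\<And>u w. E u w \<Longrightarrow> u \<in> V \<and> w \<in> V" using g unfolding graph_def by blast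
  have nbV: "\<And>u. nbrs V E u \<subseteq> V" unfolding nbrs_def by auto
  have nbE: "\<And>u w. w \<in> nbrs V E u \<longleftrightarrow> E u w" using nbrs_mem[OF g] .
  show ?case
  proof (cases "V = {}")
    case True
    then show ?thesis unfolding independent_set_def by (intro exI[of _ "{}"]) simp
  next
    case Vne: False
    show ?thesis
    proof (cases "\<exists>v\<in>V. card (nbrs V E v) \<le> 2")
      case True
      then obtain v where v: "v \<in> V" "card (nbrs V E v) \<le> 2" by blast
      define D where "D = insert v (nbrs V E v)"
      define W where "W = V - D"
      have DV: "D \<subseteq> V" using v nbV unfolding D_def by blast
      have fD: "finite D" using finite_subset[OF DV fV] .
      have cD: "card D \<le> 3" unfolding D_def using v(2) nbrs_fin[OF g, of v] by (simp add: card_insert_if)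
      have cW: "card W = card V - card D" unfolding W_def using fD DV by (simp add: card_Diff_subset)
      have "card D \<ge> 1" using fD unfolding D_def by (simp add: Suc_leI card_gt_0_iff)
      moreover have "card D \<le> card V" using card_mono[OF fV DV] .
      ultimately have lt: "card W < card V" using cW by simp
      have WV: "W \<subseteq> V" unfolding W_def by blast
      obtain I' where I': "independent_set W (restr W E) I'" "card W \<le> 3 * card I'"
        using less.hyps[OF lt restr_graph[OF g WV] restr_claw[OF cf WV] restr_k4[OF k4]
            restr_deg[OF g WV deg]] by blast
      have I'W: "I' \<subseteq> W" using I'(1) unfolding independent_set_def by simp
      show ?thesis
      proof (rule combine[OF g WV I'(1), of "{v}"])
        show "\<And>u w. u \<in> W \<Longrightarrow> w \<in> W \<Longrightarrow> E u w \<Longrightarrow> restr W E u w" unfolding restr_def by simp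
        show "{v} \<subseteq> V - W" using v unfolding W_def D_def by blast
        show "\<forall>u\<in>{v}. \<forall>w\<in>{v}. \<not> E u w" using irr by simp
        show "\<forall>j\<in>{v}. \<forall>u\<in>I'. \<not> E j u" using I'W nbE unfolding W_def D_def by blast
        show "card V \<le> card W + 3 * card {v}" using cW cD \<open>card D \<le> card V\<close> by simp
      qed (rule I'(2))
    next
      case False
      then have deg3: "\<forall>v\<in>V. card (nbrs V E v) = 3" using deg by force
      show ?thesis
      proof (cases "\<exists>a d b c. a \<in> V \<and> d \<in> V \<and> a \<noteq> d \<and> \<not> E a d \<and> b \<noteq> c \<and> E a b \<and> E a c \<and> E d b \<and> E d c")
        case True
        then obtain a d b c where abcd: "a \<in> V" "d \<in> V" "a \<noteq> d" "\<not> E a d" "b \<noteq> c" "E a b" "E a c" "E d b" "E d c"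
          by blast
        define D where "D = {a,d} \<union> (nbrs V E a \<union> nbrs V E d)"
        define W where "W = V - D"
        have DV: "D \<subseteq> V" using abcd nbV unfolding D_def by blast
        have fD: "finite D" using finite_subset[OF DV fV] .
        have "{b,c} \<subseteq> nbrs V E a \<inter> nbrs V E d" using abcd nbE by blast
        then have "card {b,c} \<le> card (nbrs V E a \<inter> nbrs V E d)"
          using card_mono[of "nbrs V E a \<inter> nbrs V E d"] nbrs_fin[OF g, of a] by simp
        then have "2 \<le> card (nbrs V E a \<inter> nbrs V E d)" using abcd by simp
        moreover have "card (nbrs V E a \<union> nbrs V E d) + card (nbrs V E a \<inter> nbrs V E d) = 6"
          using card_Un_Int[OF nbrs_fin[OF g] nbrs_fin[OF g], of a d] deg3 abcd by simp
        ultimately have "card (nbrs V E a \<union> nbrs V E d) \<le> 4" by simp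
        moreover have "card D \<le> card {a,d} + card (nbrs V E a \<union> nbrs V E d)"
          unfolding D_def by (rule card_Un_le)
        moreover have "card {a,d} = 2" using abcd by simp
        ultimately have cD: "card D \<le> 6" by simp
        have cW: "card W = card V - card D" unfolding W_def using fD DV by (simp add: card_Diff_subset)
        have "card D \<ge> 1" using fD unfolding D_def by (simp add: Suc_leI card_gt_0_iff)
        moreover have "card D \<le> card V" using card_mono[OF fV DV] .
        ultimately have lt: "card W < card V" using cW by simp
        have WV: "W \<subseteq> V" unfolding W_def by blast
        obtain I' where I': "independent_set W (restr W E) I'" "card W \<le> 3 * card I'"
          using less.hyps[OF lt restr_graph[OF g WV] restr_claw[OF cf WV] restr_k4[OF k4]
              restr_deg[OF g WV deg]] by blast
        have I'W: "I' \<subseteq> W" using I'(1) unfolding independent_set_def by simp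
        show ?thesis
        proof (rule combine[OF g WV I'(1), of "{a,d}"])
          show "\<And>u w. u \<in> W \<Longrightarrow> w \<in> W \<Longrightarrow> E u w \<Longrightarrow> restr W E u w" unfolding restr_def by simp
          show "{a,d} \<subseteq> V - W" using abcd unfolding W_def D_def by blast
          show "\<forall>u\<in>{a,d}. \<forall>w\<in>{a,d}. \<not> E u w" using irr abcd sym by blast
          show "\<forall>j\<in>{a,d}. \<forall>u\<in>I'. \<not> E j u" using I'W nbE unfolding W_def D_def by blast
          show "card V \<le> card W + 3 * card {a,d}" using cW cD \<open>card D \<le> card V\<close> abcd by simp
        qed (rule I'(2))
      next
        case nopair: False
        obtain v where v: "v \<in> V" using Vne by blast
        obtain p q r where pqr: "nbrs V E v = {p,q,r}" "p \<noteq> q" "q \<noteq> r" "p \<noteq> r"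
          using deg3 v unfolding card_3_iff by blast
        have "E v p" "E v q" "E v r" using pqr nbE by blast+
        then have "E p q \<or> E p r \<or> E q r" using claw_freeD[OF cf v, of p q r] pqr inV by blast
        then obtain x y v' where N: "nbrs V E v = {x,y,v'}" "x \<noteq> y" "x \<noteq> v'" "y \<noteq> v'" "E x y"
        proof -
          consider "E p q" | "E p r" | "E q r" using \<open>E p q \<or> E p r \<or> E q r\<close> by blast
          then show ?thesis
          proof cases
            case 1 then show ?thesis using that[of p q r] pqr by blast
          next
            case 2 then show ?thesis using that[of p r q] pqr by (simp add: insert_commute)
          next
            case 3 then show ?thesis using that[of q r p] pqr by (simp add: insert_commute)
          qed
        qed
        have inN: "x \<in> nbrs V E v" "y \<in> nbrs V E v" "v' \<in> nbrs V E v" using N(1) by auto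
        then have Ev: "E v x" "E v y" "E v v'" using nbE by auto
        have xV: "x \<in> V" and yV: "y \<in> V" and v'V: "v' \<in> V" using Ev inV by auto
        have vx: "v \<noteq> x" and vy: "v \<noteq> y" and vv': "v \<noteq> v'" using Ev irr by auto
        have cx: "card (nbrs V E x) = 3" using deg3 xV by simp
        have "v \<in> nbrs V E x" "y \<in> nbrs V E x" using sym Ev N(5) nbE by auto
        then obtain x' where Nx: "nbrs V E x = {v,y,x'}" "x' \<noteq> v" "x' \<noteq> y"
          using three_elem[OF cx _ _ vy] by blast
        have Exx': "E x x'" using Nx(1) nbE by auto
        have x'V: "x' \<in> V" using Exx' inV by auto
        have xx': "x \<noteq> x'" using Exx' irr by auto
        have v'x': "v' \<noteq> x'"
        proof
          assume eq: "v' = x'"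
          then have Exv': "E x v'" using Exx' by simp
          show False
          proof (cases "E y v'")
            case True
            then show False using k4 Ev N(5) Exv' unfolding k4free_def by blast
          next
            case False
            have "y \<in> V \<and> v' \<in> V \<and> y \<noteq> v' \<and> \<not> E y v' \<and> v \<noteq> x \<and> E y v \<and> E y x \<and> E v' v \<and> E v' x"
              using yV v'V N(4) False vx sym Ev N(5) Exv' by auto
            then show False using nopair by blast
          qed
        qed
        define T where "T = {v,x,y}"
        define W where "W = V - T"
        have TV: "T \<subseteq> V" using v xV yV unfolding T_def by auto
        have WV: "W \<subseteq> V" unfolding W_def by auto
        have v'W: "v' \<in> W" using v'V vv' N(3,4) unfolding W_def T_def by auto
        have x'W: "x' \<in> W" using x'V Nx(2,3) xx' unfolding W_def T_def by auto
        have cT: "card T = 3" using vx vy N(2) unfolding T_def by auto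
        have cW: "card W = card V - 3" unfolding W_def using TV fV cT by (simp add: card_Diff_subset finite_subset)
        have "card T \<le> card V" using card_mono[OF fV TV] .
        then have lt: "card W < card V" using cW cT by simp
        define E2 where "E2 = (\<lambda>a b. restr W E a b \<or> (a = v' \<and> b = x') \<or> (a = x' \<and> b = v'))"
        have g2: "graph W E2"
          unfolding graph_def E2_def restr_def using finite_subset[OF WV fV] v'W x'W sym irr v'x' by auto
        have NvW: "\<And>p. p \<in> W \<Longrightarrow> p \<noteq> v' \<Longrightarrow> \<not> E v p"
        proof
          fix p assume p: "p \<in> W" "p \<noteq> v'" "E v p"
          then have "p \<in> {x,y,v'}" using N(1) nbE by blast
          then show False using p v'W irr unfolding W_def T_def by auto
        qed
        have NxW: "\<And>p. p \<in> W \<Longrightarrow> p \<noteq> x' \<Longrightarrow> \<not> E x p"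
        proof
          fix p assume p: "p \<in> W" "p \<noteq> x'" "E x p"
          then have "p \<in> {v,y,x'}" using Nx(1) nbE by blast
          then show False using p x'W irr unfolding W_def T_def by auto
        qed
        have vT: "v \<notin> W" "x \<notin> W" "y \<notin> W" unfolding W_def T_def by auto
        have hv': "False" if "p \<in> W" "q \<in> W" "E v' p" "E v' q" "p \<noteq> q" "\<not> E p q" for p q
        proof -
          have "\<not> E v p" "\<not> E v q" using NvW that irr by auto
          moreover have "v \<noteq> p" "v \<noteq> q" using vT that by auto
          moreover have "p \<in> V" "q \<in> V" using that WV by auto
          ultimately show False using claw_freeD[OF cf v'V v, of p q] sym Ev that by blast
        qed
        have hx': "False" if "p \<in> W" "q \<in> W" "E x' p" "E x' q" "p \<noteq> q" "\<not> E p q" for p q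
        proof -
          have "\<not> E x p" "\<not> E x q" using NxW that irr by auto
          moreover have "x \<noteq> p" "x \<noteq> q" using vT that by auto
          moreover have "p \<in> V" "q \<in> V" using that WV by auto
          ultimately show False using claw_freeD[OF cf x'V xV, of p q] sym Exx' that by blast
        qed
        have deg2: "\<forall>u\<in>W. card (nbrs W E2 u) \<le> 3"
        proof
          fix u assume u: "u \<in> W"
          consider "u = v'" | "u = x'" | "u \<noteq> v' \<and> u \<noteq> x'" by blast
          then show "card (nbrs W E2 u) \<le> 3"
          proof cases
            case 1
            have "nbrs W E2 u \<subseteq> insert x' (nbrs V E v' - {v})"
              using 1 vT WV unfolding nbrs_def E2_def restr_def by auto
            moreover have "card (insert x' (nbrs V E v' - {v})) \<le> 3"
            proof -
              have "v \<in> nbrs V E v'" using sym Ev nbE by auto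
              then have "card (nbrs V E v' - {v}) = 2" using deg3 v'V nbrs_fin[OF g] by simp
              then show ?thesis using nbrs_fin[OF g, of v'] by (simp add: card_insert_if)
            qed
            ultimately show ?thesis using card_mono[of "insert x' (nbrs V E v' - {v})"] nbrs_fin[OF g, of v']
              by (meson finite_Diff finite_insert le_trans)
          next
            case 2
            have "nbrs W E2 u \<subseteq> insert v' (nbrs V E x' - {x})"
              using 2 vT WV unfolding nbrs_def E2_def restr_def by auto
            moreover have "card (insert v' (nbrs V E x' - {x})) \<le> 3"
            proof -
              have "x \<in> nbrs V E x'" using sym Exx' nbE by auto
              then have "card (nbrs V E x' - {x}) = 2" using deg3 x'V nbrs_fin[OF g] by simp
              then show ?thesis using nbrs_fin[OF g, of x'] by (simp add: card_insert_if)
            qed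
            ultimately show ?thesis using card_mono[of "insert v' (nbrs V E x' - {x})"] nbrs_fin[OF g, of x']
              by (meson finite_Diff finite_insert le_trans)
          next
            case 3
            have "nbrs W E2 u \<subseteq> nbrs V E u"
              using 3 WV unfolding nbrs_def E2_def restr_def by auto
            then show ?thesis using card_mono[OF nbrs_fin[OF g]] deg u WV by (meson le_trans subsetD)
          qed
        qed
        have E2E: "E a b" if "E2 a b" "\<not> (a = v' \<and> b = x')" "\<not> (a = x' \<and> b = v')" for a b
          using that unfolding E2_def restr_def by auto
        have E2W: "a \<in> W \<and> b \<in> W" if "E2 a b" for a b
          using that v'W x'W unfolding E2_def restr_def by auto
        have cf2: "claw_free W E2"
        proof -
          have "False" if h: "c\<in>W" "p\<in>W" "q\<in>W" "r\<in>W" "E2 c p" "E2 c q" "E2 c r" "p\<noteq>q" "p\<noteq>r" "q\<noteq>r"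
            "\<not>E2 p q" "\<not>E2 p r" "\<not>E2 q r" for c p q r
          proof -
            have nE: "\<not>E p q" "\<not>E p r" "\<not>E q r" using h unfolding E2_def restr_def by auto
            consider "c = v'" | "c = x'" | "c \<noteq> v' \<and> c \<noteq> x'" by blast
            then show False
            proof cases
              case 1
              have ee: "E v' w" if "E2 v' w" "w \<noteq> x'" for w using that E2E v'x' by blast
              show False
              proof (cases "p = x'")
                case True then show False using hv'[of q r] ee h nE 1 by auto
              next
                case pn: False
                show False
                proof (cases "q = x'")
                  case True then show False using hv'[of p r] ee h nE 1 by auto
                next
                  case False then show False using hv'[of p q] ee h nE 1 pn by auto
                qed
              qed
            next
              case 2
              have ee: "E x' w" if "E2 x' w" "w \<noteq> v'" for w using that E2E v'x' by blast
              show False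
              proof (cases "p = v'")
                case True then show False using hx'[of q r] ee h nE 2 by auto
              next
                case pn: False
                show False
                proof (cases "q = v'")
                  case True then show False using hx'[of p r] ee h nE 2 by auto
                next
                  case False then show False using hx'[of p q] ee h nE 2 pn by auto
                qed
              qed
            next
              case 3
              have "E c p" "E c q" "E c r" using E2E h 3 by auto
              moreover have "c \<in> V" "p \<in> V" "q \<in> V" "r \<in> V" using h WV by auto
              ultimately show False using claw_freeD[OF cf] h nE by blast
            qed
          qed
          then show ?thesis unfolding claw_free_alt by blast
        qed
        have newE: "E v' x'" if "E v' c" "E v' d" "E x' c" "E x' d" "E c d" for c d
        proof (rule ccontr)
          assume "\<not> E v' x'"
          moreover have "c \<noteq> d" using that irr by auto
          ultimately show False using nopair v'V x'V v'x' that by blast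
        qed
        have P: "False" if "E2 v' c" "E2 v' d" "E2 x' c" "E2 x' d" "E2 c d" for c d
        proof -
          have irr2: "\<And>a. \<not> E2 a a" using g2 unfolding graph_def by blast
          have "c \<noteq> x'" "c \<noteq> v'" "d \<noteq> x'" "d \<noteq> v'" using that irr2 by metis+
          then have "E v' c" "E v' d" "E x' c" "E x' d" "E c d" using that E2E by auto
          then show False using newE k4 unfolding k4free_def by blast
        qed
        have sym2: "\<And>a b. E2 a b \<Longrightarrow> E2 b a" using g2 unfolding graph_def by blast
        have k42: "k4free E2"
          unfolding k4free_def
        proof (intro allI impI)
          fix a b c d assume h: "E2 a b" "E2 a c" "E2 a d" "E2 b c" "E2 b d" "E2 c d"
          show False
          proof (cases "E v' x'")
            case True
            have "E a b" "E a c" "E a d" "E b c" "E b d" "E c d" using h True sym unfolding E2_def restr_def by auto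
            then show False using k4 unfolding k4free_def by blast
          next
            case False
            define np where "np = (\<lambda>a b. (a = v' \<and> b = x') \<or> (a = x' \<and> b = v'))"
            have P': "False" if "np a b" "E2 a c" "E2 a d" "E2 b c" "E2 b d" "E2 c d" for a b c d
              using that P[of c d] unfolding np_def by auto
            have EE: "E a b" if "E2 a b" "\<not> np a b" for a b using that E2E unfolding np_def by auto
            consider "np a b" | "np a c" | "np a d" | "np b c" | "np b d" | "np c d"
              | "\<not> np a b \<and> \<not> np a c \<and> \<not> np a d \<and> \<not> np b c \<and> \<not> np b d \<and> \<not> np c d" by blast
            then show False
            proof cases
              case 1 then show ?thesis using P'[of a b c d] h by blast
            next
              case 2 then show ?thesis using P'[of a c b d] h sym2 by blast
            next
              case 3 then show ?thesis using P'[of a d b c] h sym2 by blast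
            next
              case 4 then show ?thesis using P'[of b c a d] h sym2 by blast
            next
              case 5 then show ?thesis using P'[of b d a c] h sym2 by blast
            next
              case 6 then show ?thesis using P'[of c d a b] h sym2 by blast
            next
              case 7
              then have "E a b" "E a c" "E a d" "E b c" "E b d" "E c d" using EE h by auto
              then show ?thesis using k4 unfolding k4free_def by blast
            qed
          qed
        qed
        obtain I' where I': "independent_set W E2 I'" "card W \<le> 3 * card I'"
          using less.hyps[OF lt g2 cf2 k42 deg2] by blast
        have I'W: "I' \<subseteq> W" using I'(1) unfolding independent_set_def by simp
        have "E2 v' x'" unfolding E2_def by simp
        then have nb: "\<not> (v' \<in> I' \<and> x' \<in> I')" using I'(1) unfolding independent_set_def by blast
        obtain w where w: "w \<in> T" "\<forall>u\<in>I'. \<not> E w u"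
        proof (cases "v' \<in> I'")
          case True
          then have "x' \<notin> I'" using nb by blast
          then have "\<forall>u\<in>I'. \<not> E x u" using Nx(1) nbE I'W vT by (metis empty_iff insertE subsetD)
          then show ?thesis using that[of x] unfolding T_def by blast
        next
          case False
          then have "\<forall>u\<in>I'. \<not> E v u" using N(1) nbE I'W vT by (metis empty_iff insertE subsetD)
          then show ?thesis using that[of v] unfolding T_def by blast
        qed
        show ?thesis
        proof (rule combine[OF g WV I'(1), of "{w}"])
          show "\<And>u w. u \<in> W \<Longrightarrow> w \<in> W \<Longrightarrow> E u w \<Longrightarrow> E2 u w" unfolding E2_def restr_def by simp
          show "{w} \<subseteq> V - W" using w TV unfolding W_def by blast
          show "\<forall>u\<in>{w}. \<forall>w\<in>{w}. \<not> E u w" using irr by simp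
          show "\<forall>j\<in>{w}. \<forall>u\<in>I'. \<not> E j u" using w by blast
          show "card V \<le> card W + 3 * card {w}" using cW \<open>card T \<le> card V\<close> cT by simp
        qed (rule I'(2))
      qed
    qed
  qed
qed



lemma k4free_of:
  assumes g: "graph V E" and conn: "connected_graph V E" and c: "cubic V E" and nk: "\<not> is_K4 V E"
  shows "k4free E"
  unfolding k4free_def
proof (intro allI impI)
  fix a b c d assume h: "E a b" "E a c" "E a d" "E b c" "E b d" "E c d"
  have sym: "\<And>u w. E u w \<Longrightarrow> E w u" using g unfolding graph_def by blast
  have irr: "\<And>u. \<not> E u u" using g unfolding graph_def by blast
  have inV: "\<And>u w. E u w \<Longrightarrow> u \<in> V \<and> w \<in> V" using g unfolding graph_def by blast
  have nbE: "\<And>u w. w \<in> nbrs V E u \<longleftrightarrow> E u w" using nbrs_mem[OF g] .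
  have ne: "a \<noteq> b" "a \<noteq> c" "a \<noteq> d" "b \<noteq> c" "b \<noteq> d" "c \<noteq> d" using h irr by metis+
  define K where "K = {a,b,c,d}"
  have KV: "K \<subseteq> V" using h inV unfolding K_def by auto
  have nsub: "nbrs V E u \<subseteq> K" if "u \<in> K" for u
  proof -
    have uV: "u \<in> V" using that KV by auto
    have c3: "card (nbrs V E u) = 3" using c uV unfolding cubic_def by simp
    have "K - {u} \<subseteq> nbrs V E u" using that h sym unfolding K_def by (auto simp: nbE)
    moreover have "card (K - {u}) = 3" using that ne unfolding K_def by auto
    ultimately have "K - {u} = nbrs V E u" using card_subset_eq[OF nbrs_fin[OF g]] c3 by metis
    then show ?thesis by auto
  qed
  have cl: "w \<in> K" if "E\<^sup>*\<^sup>* u w" "u \<in> K" for u w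
    using that
  proof (induction rule: rtranclp_induct)
    case base then show ?case .
  next
    case (step y z) then show ?case using nsub nbE inV by blast
  qed
  have aV: "a \<in> V" using h inV by auto
  have "V \<subseteq> K"
  proof
    fix w assume "w \<in> V"
    then have "E\<^sup>*\<^sup>* a w" using conn aV unfolding connected_graph_def by auto
    then show "w \<in> K" using cl unfolding K_def by auto
  qed
  then have VK: "V = K" using KV by auto
  have "card V = 4" using VK ne unfolding K_def by auto
  moreover have "\<forall>u\<in>V. \<forall>w\<in>V. u \<noteq> w \<longrightarrow> E u w" using VK h sym unfolding K_def by auto
  ultimately show False using nk unfolding is_K4_def by blast
qed

theorem theorem3p7:
  fixes V :: "'a set" and E :: "'a \<Rightarrow> 'a \<Rightarrow> bool"
  assumes "graph V E" and "connected_graph V E" and "claw_free V E" and "cubic V E"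
    and "\<not> is_K4 V E"
  shows "real (card V) / 3 \<le> real (independence_number V E)
       \<and> real (independence_number V E) \<le> 2 * real (card V) / 5
       \<and> 3 * real (card V) / 5 \<le> real (min_percolating V E 3)
       \<and> real (min_percolating V E 3) \<le> 2 * real (card V) / 3"
proof -
  note g = assms(1) and c = assms(4) and cf = assms(3)
  have fV: "finite V" using g unfolding graph_def by simp
  have k4: "k4free E" using k4free_of assms by blast
  have deg: "\<forall>v\<in>V. card (nbrs V E v) \<le> 3" using c unfolding cubic_def by simp
  obtain I0 where I0: "independent_set V E I0" "card V \<le> 3 * card I0"
    using alpha_lower[OF g cf k4 deg] by blast
  have I0V: "I0 \<subseteq> V" using I0(1) unfolding independent_set_def by simp
  define F where "F = {I. independent_set V E I}"
  have "F \<subseteq> Pow V" unfolding F_def independent_set_def by auto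
  then have fF: "finite F" using finite_subset fV by blast
  have I0F: "I0 \<in> F" using I0 unfolding F_def by simp
  have a1: "card I0 \<le> independence_number V E"
    unfolding independence_number_def F_def[symmetric] using fF I0F by (simp add: Max_ge)
  have "Max (card ` F) \<in> card ` F" using Max_in[OF finite_imageI[OF fF]] I0F by blast
  then obtain Im where Im: "Im \<in> F" "card Im = independence_number V E"
    unfolding independence_number_def F_def[symmetric] by auto
  have a2: "5 * independence_number V E \<le> 2 * card V"
    using indep_upper[OF g c cf, of Im] Im unfolding F_def by simp
  define P where "P = {S. percolating V E 3 S}"
  have "P \<subseteq> Pow V" unfolding P_def percolating_def by auto
  then have fP: "finite P" using finite_subset fV by blast
  have SP: "V - I0 \<in> P" unfolding P_def using perc_char[OF g c] I0(1) I0V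
    by (simp add: double_diff)
  have m1: "min_percolating V E 3 \<le> card (V - I0)"
    unfolding min_percolating_def P_def[symmetric] using fP SP by (simp add: Min_le)
  have "Min (card ` P) \<in> card ` P" using Min_in[OF finite_imageI[OF fP]] SP by blast
  then obtain S0 where S0: "S0 \<in> P" "card S0 = min_percolating V E 3"
    unfolding min_percolating_def P_def[symmetric] by auto
  have S0': "S0 \<subseteq> V" "independent_set V E (V - S0)" using S0(1) perc_char[OF g c] unfolding P_def by auto
  have m2: "5 * card (V - S0) \<le> 2 * card V" using indep_upper[OF g c cf S0'(2)] .
  have cS0: "card (V - S0) = card V - card S0" using S0'(1) finite_subset[OF S0'(1) fV] by (simp add: card_Diff_subset)
  have cI0: "card (V - I0) = card V - card I0" using I0V finite_subset[OF I0V fV] by (simp add: card_Diff_subset)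
  have S0le: "card S0 \<le> card V" using card_mono[OF fV S0'(1)] .
  have I0le: "card I0 \<le> card V" using card_mono[OF fV I0V] .
  define al where "al = independence_number V E"
  define m where "m = min_percolating V E 3"
  have n1: "card V \<le> 3 * al" using I0(2) a1 unfolding al_def by linarith
  have n2: "5 * al \<le> 2 * card V" using a2 unfolding al_def .
  have n3: "3 * card V \<le> 5 * m" using m2 cS0 S0(2) S0le unfolding m_def by linarith
  have n4: "3 * m \<le> 2 * card V" using m1 cI0 I0le I0(2) unfolding m_def by linarith
  have r1: "real (card V) \<le> real (3 * al)" using n1 by (simp only: of_nat_le_iff)
  have r2: "real (5 * al) \<le> real (2 * card V)" using n2 by (simp only: of_nat_le_iff)
  have r3: "real (3 * card V) \<le> real (5 * m)" using n3 by (simp only: of_nat_le_iff)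
  have r4: "real (3 * m) \<le> real (2 * card V)" using n4 by (simp only: of_nat_le_iff)
  show ?thesis using r1 r2 r3 r4 unfolding al_def[symmetric] m_def[symmetric] of_nat_mult by simp
qed

end
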